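(* Let $A\in\mathbf{R}^{n\times n}$, $C_j\in\mathbf{R}^{m_j\times n}$ ($j=1,\ldots,N$), $H\in\mathbf{R}^{p\times n}$, and let $\mathcal{L}$ be the Laplacian of a directed graph $\mathbf{G}$ on $N$ nodes which has a spanning tree with root node $i$. Set $\bar A=I_N\otimes A$, $\bar C=\mathrm{diag}[C_1,\ldots,C_N]$, $\bar H=\mathcal{L}\otimes H$. Suppose $(C_i,A)$ is detectable and $\mathcal{O}_H\cap\mathcal{C}_j=\{0\}$ for all $j=1,\ldots,N$, where $\mathcal{C}_j$ is the undetectable subspace of $(C_j,A)$ and $\mathcal{O}_H=\bigcap_{l=1}^n\operatorname{Ker}(HA^{l-1})$. Then the pair $\left(\begin{bmatrix}\bar C\\ \bar H\end{bmatrix},\bar A\right)$ is detectable.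
   Context: Directed graph on $\{1,\ldots,N\}$ without self-loops; adjacency matrix $\mathbf{A}=[\mathbf{a}_{kl}]$ with $\mathbf{a}_{kl}=1$ if there is an edge from $l$ to $k$, else $0$; $p_k$ the in-degree of node $k$; Laplacian $\mathcal{L}=\mathrm{diag}[p_1,\ldots,p_N]-\mathbf{A}$. A spanning tree rooted at $i$ is a directed tree containing all nodes in which every node is reachable from $i$ by a directed path. For a square matrix $F$ with minimal polynomial $\alpha_F=\alpha_F^-\alpha_F^+$ (zeros of $\alpha_F^-$ in the open left half-plane, of $\alpha_F^+$ in the closed right half-plane), the undetectable subspace of $(G,F)$ is $\bigcap_{l=1}^n\operatorname{Ker}(GF^{l-1})\cap\operatorname{Ker}\alpha_F^+(F)$; the pair is detectable iff this subspace is $\{0\}$. *)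

theory Defs
  imports Complex_Main "HOL-Computational_Algebra.Polynomial" "Jordan_Normal_Form.Matrix"
begin

definition kron :: "'a::times mat \<Rightarrow> 'a mat \<Rightarrow> 'a mat" where
  "kron P Q = mat (dim_row P * dim_row Q) (dim_col P * dim_col Q)
     (\<lambda>(r, c). P $$ (r div dim_row Q, c div dim_col Q) * Q $$ (r mod dim_row Q, c mod dim_col Q))"

text \<open>Vertical stacking [P; Q] (P and Q are assumed to have the same number of columns).\<close>
definition vstack :: "'a mat \<Rightarrow> 'a mat \<Rightarrow> 'a mat" where
  "vstack P Q = mat (dim_row P + dim_row Q) (dim_col P)
     (\<lambda>(r, c). if r < dim_row P then P $$ (r, c) else Q $$ (r - dim_row P, c))"

definition poly_mat :: "'a::comm_ring_1 poly \<Rightarrow> 'a mat \<Rightarrow> 'a mat" where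
  "poly_mat q F = foldr (\<lambda>k M. coeff q k \<cdot>\<^sub>m (F ^\<^sub>m k) + M) [0..<Suc (degree q)]
                      (0\<^sub>m (dim_row F) (dim_row F))"

definition min_poly :: "real mat \<Rightarrow> real poly" where
  "min_poly F = (THE q. lead_coeff q = 1 \<and> poly_mat q F = 0\<^sub>m (dim_row F) (dim_row F) \<and>
     (\<forall>r. r \<noteq> 0 \<and> poly_mat r F = 0\<^sub>m (dim_row F) (dim_row F) \<longrightarrow> degree q \<le> degree r))"

definition alpha_plus :: "real mat \<Rightarrow> complex poly" where
  "alpha_plus F = (let q = map_poly complex_of_real (min_poly F) in
     (\<Prod>z \<in> {z. poly q z = 0 \<and> Re z \<ge> 0}. [:- z, 1:] ^ order z q))"

definition undetectable_subspace :: "real mat \<Rightarrow> real mat \<Rightarrow> real vec set" where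
  "undetectable_subspace G F = {x \<in> carrier_vec (dim_row F).
     (\<forall>l \<in> {1..dim_row F}. (G * F ^\<^sub>m (l - 1)) *\<^sub>v x = 0\<^sub>v (dim_row G)) \<and>
     poly_mat (alpha_plus F) (map_mat complex_of_real F) *\<^sub>v map_vec complex_of_real x
        = 0\<^sub>v (dim_row F)}"

definition detectable :: "real mat \<Rightarrow> real mat \<Rightarrow> bool" where
  "detectable G F \<longleftrightarrow> undetectable_subspace G F = {0\<^sub>v (dim_row F)}"

definition unobservable_subspace :: "real mat \<Rightarrow> real mat \<Rightarrow> real vec set" where
  "unobservable_subspace H F = {x \<in> carrier_vec (dim_row F).
     \<forall>l \<in> {1..dim_row F}. (H * F ^\<^sub>m (l - 1)) *\<^sub>v x = 0\<^sub>v (dim_row H)}"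

text \<open>Nodes are 0..N-1; (l,k) \<in> E means an edge from l to k.\<close>
definition adjacency :: "nat \<Rightarrow> (nat \<times> nat) set \<Rightarrow> real mat" where
  "adjacency N E = mat N N (\<lambda>(k, l). if (l, k) \<in> E then 1 else 0)"

definition in_degree :: "nat \<Rightarrow> (nat \<times> nat) set \<Rightarrow> nat \<Rightarrow> nat" where
  "in_degree N E k = card {l \<in> {0..<N}. (l, k) \<in> E}"

definition laplacian :: "nat \<Rightarrow> (nat \<times> nat) set \<Rightarrow> real mat" where
  "laplacian N E = mat N N (\<lambda>(k, l). if k = l then real (in_degree N E k) else 0)
                   - adjacency N E"

definition has_spanning_tree :: "nat \<Rightarrow> (nat \<times> nat) set \<Rightarrow> nat \<Rightarrow> bool" where
  "has_spanning_tree N E i \<longleftrightarrow> i < N \<and> (\<exists>T \<subseteq> E.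
     (\<forall>l. (l, i) \<notin> T) \<and>
     (\<forall>k < N. k \<noteq> i \<longrightarrow> (\<exists>!l. (l, k) \<in> T)) \<and>
     (\<forall>k < N. (i, k) \<in> T\<^sup>*))"

end

theory Submission
  imports Defs
begin

definition blk :: "nat \<Rightarrow> nat \<Rightarrow> 'a vec \<Rightarrow> 'a vec" where
  "blk n j z = vec n (\<lambda>t. z $ (j*n+t))"

lemma blk_carrier[simp]: "blk n j z \<in> carrier_vec n" "dim_vec (blk n j z) = n"
  by (auto simp: blk_def)
lemma blk_index[simp]: "t < n \<Longrightarrow> blk n j z $ t = z $ (j*n+t)"
  by (simp add: blk_def)

lemma sum_blocks: fixes f :: "nat \<Rightarrow> 'a::comm_monoid_add" shows "(\<Sum>s<b*d. f s) = (\<Sum>l<b. \<Sum>t<d. f (l*d+t))"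
proof -
  have "(\<Sum>s<b*d. f s) = (\<Sum>l<b. sum f {l*d..<l*d+d})"
    using sum.nat_group[of f d b] by simp
  also have "\<dots> = (\<Sum>l<b. \<Sum>t<d. f (l*d+t))"
  proof (rule sum.cong[OF refl])
    fix l show "sum f {l*d..<l*d+d} = (\<Sum>t<d. f (l*d+t))"
    proof -
      have "sum f {0 + l*d..<d + l*d} = (\<Sum>i=0..<d. f (i + l*d))" by (rule sum.shift_bounds_nat_ivl)
      thus ?thesis by (simp add: lessThan_atLeast0 add.commute)
    qed
  qed
  finally show ?thesis .
qed

lemma kron_dims[simp]: "dim_row (kron P Q) = dim_row P * dim_row Q" "dim_col (kron P Q) = dim_col P * dim_col Q"
  by (auto simp: kron_def)

lemma idx_lt: "k < a \<Longrightarrow> r < (c::nat) \<Longrightarrow> k*c+r < a*c"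
proof -
  assume "k < a" "r < c"
  hence "Suc k * c \<le> a * c" by (intro mult_right_mono) auto
  thus ?thesis using \<open>r < c\<close> by simp
qed

lemma kron_mult_vec:
  fixes P Q :: "'a::comm_ring_1 mat"
  assumes P: "P \<in> carrier_mat a b" and Q: "Q \<in> carrier_mat c d" and z: "z \<in> carrier_vec (b*d)"
    and k: "k < a" and r: "r < c"
  shows "(kron P Q *\<^sub>v z) $ (k*c+r) = (\<Sum>l<b. P $$ (k,l) * (Q *\<^sub>v blk d l z) $ r)"
proof -
  have kr: "k*c+r < a*c" using idx_lt k r .
  have "(kron P Q *\<^sub>v z) $ (k*c+r) = (\<Sum>s<b*d. kron P Q $$ (k*c+r, s) * z $ s)"
    using kr P Q z by (simp add: scalar_prod_def lessThan_atLeast0)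
  also have "\<dots> = (\<Sum>l<b. \<Sum>t<d. kron P Q $$ (k*c+r, l*d+t) * z $ (l*d+t))"
    by (rule sum_blocks)
  also have "\<dots> = (\<Sum>l<b. \<Sum>t<d. P $$ (k,l) * (Q $$ (r,t) * z $ (l*d+t)))"
  proof (intro sum.cong refl)
    fix l t assume l: "l \<in> {..<b}" and t: "t \<in> {..<d}"
    have lt: "l*d+t < b*d" using idx_lt l t by auto
    have "(k*c+r) div c = k" "(k*c+r) mod c = r" using r by auto
    moreover have "(l*d+t) div d = l" "(l*d+t) mod d = t" using t by auto
    ultimately show "kron P Q $$ (k*c+r, l*d+t) * z $ (l*d+t) = P $$ (k,l) * (Q $$ (r,t) * z $ (l*d+t))"
      using kr lt P Q by (simp add: kron_def)
  qed
  also have "\<dots> = (\<Sum>l<b. P $$ (k,l) * (Q *\<^sub>v blk d l z) $ r)"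
    using Q r by (simp add: sum_distrib_left scalar_prod_def lessThan_atLeast0)
  finally show ?thesis .
qed

lemma zero_mat_mult_vec[simp]: "v \<in> carrier_vec b \<Longrightarrow> (0\<^sub>m a b :: 'a::semiring_0 mat) *\<^sub>v v = 0\<^sub>v a"
  by (intro eq_vecI) (auto simp: scalar_prod_def)

lemma smult_mat_mult_vec: "M \<in> carrier_mat a b \<Longrightarrow> v \<in> carrier_vec b \<Longrightarrow>
  (c \<cdot>\<^sub>m (M :: 'a::comm_semiring_0 mat)) *\<^sub>v v = c \<cdot>\<^sub>v (M *\<^sub>v v)"
  by (intro eq_vecI) (auto simp: scalar_prod_def sum_distrib_left mult.assoc)

lemma blk_add: assumes "u \<in> carrier_vec (N*n)" "v \<in> carrier_vec (N*n)" "j < N"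
  shows "blk n j (u + v) = blk n j u + blk n j v"
proof (rule eq_vecI)
  fix t assume "t < dim_vec (blk n j u + blk n j v)" hence t: "t < n" by simp
  have "j*n+t < N*n" by (rule idx_lt) (use assms t in auto)
  thus "blk n j (u + v) $ t = (blk n j u + blk n j v) $ t" using t assms by simp
qed simp

lemma blk_smult: assumes "u \<in> carrier_vec (N*n)" "j < N"
  shows "blk n j (c \<cdot>\<^sub>v u) = c \<cdot>\<^sub>v blk n j u"
proof (rule eq_vecI)
  fix t assume "t < dim_vec (c \<cdot>\<^sub>v blk n j u)" hence t: "t < n" by simp
  have "j*n+t < N*n" by (rule idx_lt) (use assms t in auto)
  thus "blk n j (c \<cdot>\<^sub>v u) $ t = (c \<cdot>\<^sub>v blk n j u) $ t" using t assms by simp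
qed simp

lemma blk_zero: assumes "j < N" shows "blk n j (0\<^sub>v (N*n)) = 0\<^sub>v n"
proof (rule eq_vecI)
  fix t assume "t < dim_vec (0\<^sub>v n :: 'a vec)" hence t: "t < n" by simp
  have "j*n+t < N*n" by (rule idx_lt) (use assms t in auto)
  thus "blk n j (0\<^sub>v (N*n)) $ t = (0\<^sub>v n :: 'a::zero vec) $ t" using t assms by simp
qed simp

lemma blk_map: assumes "u \<in> carrier_vec (N*n)" "j < N"
  shows "blk n j (map_vec f u) = map_vec f (blk n j u)"
proof (rule eq_vecI)
  fix t assume "t < dim_vec (map_vec f (blk n j u))" hence t: "t < n" by simp
  have "j*n+t < N*n" by (rule idx_lt) (use assms t in auto)
  thus "blk n j (map_vec f u) $ t = map_vec f (blk n j u) $ t" using t assms by simp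
qed simp

lemma kron_one_blk:
  fixes A :: "'a::comm_ring_1 mat"
  assumes A: "A \<in> carrier_mat n n" and z: "z \<in> carrier_vec (N*n)" and j: "j < N"
  shows "blk n j (kron (1\<^sub>m N) A *\<^sub>v z) = A *\<^sub>v blk n j z"
proof (intro eq_vecI)
  fix t assume "t < dim_vec (A *\<^sub>v blk n j z)"
  hence t: "t < n" using A by simp
  have "blk n j (kron (1\<^sub>m N) A *\<^sub>v z) $ t = (kron (1\<^sub>m N) A *\<^sub>v z) $ (j*n+t)" using t by simp
  also have "\<dots> = (\<Sum>l<N. 1\<^sub>m N $$ (j,l) * (A *\<^sub>v blk n l z) $ t)"
    using kron_mult_vec[OF one_carrier_mat A z j t] .
  also have "\<dots> = (\<Sum>l<N. if l = j then (A *\<^sub>v blk n l z) $ t else 0)"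
    by (rule sum.cong) (auto simp: j)
  also have "\<dots> = (A *\<^sub>v blk n j z) $ t" using j by (simp add: sum.delta)
  finally show "blk n j (kron (1\<^sub>m N) A *\<^sub>v z) $ t = (A *\<^sub>v blk n j z) $ t" .
qed (use A in simp)

lemma kron_one_carrier: assumes "A \<in> carrier_mat n n" shows "kron (1\<^sub>m N) A \<in> carrier_mat (N*n) (N*n)"
proof -
  have r: "dim_row A = n" "dim_col A = n" using assms by auto
  show ?thesis by (rule carrier_matI) (simp_all only: kron_dims index_one_mat r)
qed

lemma kron_one_pow_blk:
  fixes A :: "'a::comm_ring_1 mat"
  assumes A: "A \<in> carrier_mat n n" and j: "j < N"
  shows "z \<in> carrier_vec (N*n) \<Longrightarrow> blk n j ((kron (1\<^sub>m N) A ^\<^sub>m m) *\<^sub>v z) = (A ^\<^sub>m m) *\<^sub>v blk n j z"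
proof (induction m arbitrary: z)
  case 0
  have d: "dim_row (kron (1\<^sub>m N) A) = N*n" "dim_row A = n" using A by auto
  have "blk n j ((kron (1\<^sub>m N) A ^\<^sub>m 0) *\<^sub>v z) = blk n j z"
    unfolding pow_mat.simps d using one_mult_mat_vec[OF 0] by simp
  also have "\<dots> = (A ^\<^sub>m 0) *\<^sub>v blk n j z"
    unfolding pow_mat.simps d by (rule one_mult_mat_vec[symmetric]) (rule blk_carrier)
  finally show ?case .
next
  case (Suc m)
  define F where "F = kron (1\<^sub>m N) A"
  have F: "F \<in> carrier_mat (N*n) (N*n)" using kron_one_carrier[OF A] unfolding F_def .
  have e2: "(F ^\<^sub>m m * F) *\<^sub>v z = (F ^\<^sub>m m) *\<^sub>v (F *\<^sub>v z)"
    by (rule assoc_mult_mat_vec[OF pow_carrier_mat[OF F] F Suc.prems])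
  have e3: "blk n j ((F ^\<^sub>m m) *\<^sub>v (F *\<^sub>v z)) = (A ^\<^sub>m m) *\<^sub>v blk n j (F *\<^sub>v z)"
    unfolding F_def by (rule Suc.IH) (rule mult_mat_vec_carrier[OF F[unfolded F_def] Suc.prems])
  have e4: "blk n j (F *\<^sub>v z) = A *\<^sub>v blk n j z"
    unfolding F_def by (rule kron_one_blk[OF A Suc.prems j])
  have e5: "(A ^\<^sub>m m * A) *\<^sub>v blk n j z = (A ^\<^sub>m m) *\<^sub>v (A *\<^sub>v blk n j z)"
    by (rule assoc_mult_mat_vec[OF pow_carrier_mat[OF A] A blk_carrier(1)])
  show ?case unfolding pow_mat.simps F_def[symmetric] e2 e3 e4 e5 ..
qed

lemma foldr_carrier:
  assumes G: "G \<in> carrier_mat d d"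
  shows "foldr (\<lambda>k M. c k \<cdot>\<^sub>m (G ^\<^sub>m k) + M) ks (0\<^sub>m d d) \<in> carrier_mat d d"
  by (induction ks) (use G in auto)

lemma foldr_blk:
  fixes A :: "'a::comm_ring_1 mat"
  assumes A: "A \<in> carrier_mat n n" and j: "j < N" and z: "z \<in> carrier_vec (N*n)"
  shows "blk n j (foldr (\<lambda>k M. c k \<cdot>\<^sub>m (kron (1\<^sub>m N) A ^\<^sub>m k) + M) ks (0\<^sub>m (N*n) (N*n)) *\<^sub>v z)
       = foldr (\<lambda>k M. c k \<cdot>\<^sub>m (A ^\<^sub>m k) + M) ks (0\<^sub>m n n) *\<^sub>v blk n j z"
proof (induction ks)
  case Nil
  show ?case using blk_zero[OF j] z by simp
next
  case (Cons k ks)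
  define F where "F = kron (1\<^sub>m N) A"
  have F: "F \<in> carrier_mat (N*n) (N*n)" using kron_one_carrier[OF A] unfolding F_def .
  define SF where "SF = foldr (\<lambda>k M. c k \<cdot>\<^sub>m (F ^\<^sub>m k) + M) ks (0\<^sub>m (N*n) (N*n))"
  define SA where "SA = foldr (\<lambda>k M. c k \<cdot>\<^sub>m (A ^\<^sub>m k) + M) ks (0\<^sub>m n n)"
  have SF: "SF \<in> carrier_mat (N*n) (N*n)" unfolding SF_def by (rule foldr_carrier[OF F])
  have SA: "SA \<in> carrier_mat n n" unfolding SA_def by (rule foldr_carrier[OF A])
  have IH: "blk n j (SF *\<^sub>v z) = SA *\<^sub>v blk n j z" using Cons.IH unfolding SF_def SA_def F_def .
  have P: "blk n j ((F ^\<^sub>m k) *\<^sub>v z) = (A ^\<^sub>m k) *\<^sub>v blk n j z"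
    unfolding F_def by (rule kron_one_pow_blk[OF A j z])
  have "(c k \<cdot>\<^sub>m (F ^\<^sub>m k) + SF) *\<^sub>v z = c k \<cdot>\<^sub>v ((F ^\<^sub>m k) *\<^sub>v z) + SF *\<^sub>v z"
    using add_mult_distrib_mat_vec[OF smult_carrier_mat[OF pow_carrier_mat[OF F]] SF z]
      smult_mat_mult_vec[OF pow_carrier_mat[OF F] z] by simp
  hence "blk n j ((c k \<cdot>\<^sub>m (F ^\<^sub>m k) + SF) *\<^sub>v z) = c k \<cdot>\<^sub>v ((A ^\<^sub>m k) *\<^sub>v blk n j z) + SA *\<^sub>v blk n j z"
    using blk_add[where u="c k \<cdot>\<^sub>v ((F ^\<^sub>m k) *\<^sub>v z)" and v="SF *\<^sub>v z", OF _ _ j]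
      blk_smult[where u="(F ^\<^sub>m k) *\<^sub>v z", OF _ j] P IH
      mult_mat_vec_carrier[OF pow_carrier_mat[OF F] z] mult_mat_vec_carrier[OF SF z] by simp
  also have "\<dots> = (c k \<cdot>\<^sub>m (A ^\<^sub>m k) + SA) *\<^sub>v blk n j z"
    using add_mult_distrib_mat_vec[OF smult_carrier_mat[OF pow_carrier_mat[OF A]] SA blk_carrier(1)]
      smult_mat_mult_vec[OF pow_carrier_mat[OF A] blk_carrier(1)] by simp
  finally show ?case unfolding SF_def SA_def F_def by simp
qed

lemma kron_dims_one: "A \<in> carrier_mat n n \<Longrightarrow> dim_row (kron (1\<^sub>m N) A) = N*n"
  by (simp only: kron_dims index_one_mat carrier_matD)

lemma poly_carrier: "G \<in> carrier_mat d d \<Longrightarrow> poly_mat q G \<in> carrier_mat d d"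
proof -
  assume G: "G \<in> carrier_mat d d"
  hence r: "dim_row G = d" by auto
  show ?thesis unfolding poly_mat_def r by (rule foldr_carrier[OF G])
qed

lemma poly_blk:
  fixes A :: "'a::comm_ring_1 mat"
  assumes A: "A \<in> carrier_mat n n" and j: "j < N" and z: "z \<in> carrier_vec (N*n)"
  shows "blk n j (poly_mat q (kron (1\<^sub>m N) A) *\<^sub>v z) = poly_mat q A *\<^sub>v blk n j z"
proof -
  have r: "dim_row (kron (1\<^sub>m N) A) = N*n" "dim_row A = n" using kron_dims_one[OF A] A by auto
  show ?thesis unfolding poly_mat_def r by (rule foldr_blk[OF A j z])
qed

lemma mat_zero_by_vec:
  fixes M :: "'a::semiring_1 mat"
  assumes M: "M \<in> carrier_mat a b" and h: "\<And>v. v \<in> carrier_vec b \<Longrightarrow> M *\<^sub>v v = 0\<^sub>v a"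
  shows "M = 0\<^sub>m a b"
proof (rule eq_matI)
  fix i k assume i: "i < dim_row (0\<^sub>m a b :: 'a mat)" and k: "k < dim_col (0\<^sub>m a b :: 'a mat)"
  hence i': "i < a" and k': "k < b" by auto
  have "(M *\<^sub>v unit_vec b k) $ i = 0" using h[of "unit_vec b k"] i' by simp
  moreover have "(M *\<^sub>v unit_vec b k) $ i = M $$ (i,k)" using M i' k' by simp
  ultimately show "M $$ (i,k) = 0\<^sub>m a b $$ (i,k)" using i' k' by simp
qed (use M in auto)

lemma blk_embed: assumes v: "v \<in> carrier_vec n" and N: "0 < N"
  shows "blk n 0 (vec (N*n) (\<lambda>s. if s < n then v $ s else 0)) = v"
proof (rule eq_vecI)
  fix t assume "t < dim_vec v" hence t: "t < n" using v by simp
  have "n \<le> N*n" using N by simp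
  hence "t < N*n" using t by linarith
  thus "blk n 0 (vec (N*n) (\<lambda>s. if s < n then v $ s else 0)) $ t = v $ t" using t by simp
qed (use v in simp)

lemma blk_decomp: fixes s N n :: nat assumes s: "s < N*n" shows "s div n < N" "s mod n < n" "s = (s div n) * n + s mod n"
proof -
  have n: "0 < n" using s by (cases n) auto
  show "s div n < N" using s by (simp add: less_mult_imp_div_less)
  show "s mod n < n" using n by simp
  show "s = (s div n) * n + s mod n" by simp
qed

lemma vec_zero_by_blk:
  assumes u: "u \<in> carrier_vec (N*n)" and h: "\<And>j. j < N \<Longrightarrow> blk n j u = 0\<^sub>v n"
  shows "u = 0\<^sub>v (N*n)"
proof (rule eq_vecI)
  fix s assume "s < dim_vec (0\<^sub>v (N*n) :: 'a vec)" hence s: "s < N*n" by simp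
  note d = blk_decomp[OF s]
  have "u $ s = blk n (s div n) u $ (s mod n)" using d(2) by (simp flip: d(3))
  also have "\<dots> = 0" using h[OF d(1)] d(2) by simp
  finally show "u $ s = 0\<^sub>v (N*n) $ s" using s by simp
qed (use u in simp)

lemma poly_zero_iff:
  fixes A :: "'a::comm_ring_1 mat"
  assumes A: "A \<in> carrier_mat n n" and N: "0 < N"
  shows "(poly_mat q (kron (1\<^sub>m N) A) = 0\<^sub>m (N*n) (N*n)) \<longleftrightarrow> (poly_mat q A = 0\<^sub>m n n)"
proof
  have F: "kron (1\<^sub>m N) A \<in> carrier_mat (N*n) (N*n)" by (rule kron_one_carrier[OF A])
  note PF = poly_carrier[OF F, of q] and PA = poly_carrier[OF A, of q]
  assume z: "poly_mat q (kron (1\<^sub>m N) A) = 0\<^sub>m (N*n) (N*n)"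
  show "poly_mat q A = 0\<^sub>m n n"
  proof (rule mat_zero_by_vec[OF PA])
    fix v :: "'a vec" assume v: "v \<in> carrier_vec n"
    define w where "w = vec (N*n) (\<lambda>s. if s < n then v $ s else 0)"
    have w: "w \<in> carrier_vec (N*n)" unfolding w_def by simp
    have "poly_mat q A *\<^sub>v v = poly_mat q A *\<^sub>v blk n 0 w" using blk_embed[OF v N] unfolding w_def by simp
    also have "\<dots> = blk n 0 (poly_mat q (kron (1\<^sub>m N) A) *\<^sub>v w)" using poly_blk[OF A N w] by simp
    also have "\<dots> = 0\<^sub>v n" unfolding z using w blk_zero[OF N] by simp
    finally show "poly_mat q A *\<^sub>v v = 0\<^sub>v n" .
  qed
next
  have F: "kron (1\<^sub>m N) A \<in> carrier_mat (N*n) (N*n)" by (rule kron_one_carrier[OF A])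
  note PF = poly_carrier[OF F, of q] and PA = poly_carrier[OF A, of q]
  assume z: "poly_mat q A = 0\<^sub>m n n"
  show "poly_mat q (kron (1\<^sub>m N) A) = 0\<^sub>m (N*n) (N*n)"
  proof (rule mat_zero_by_vec[OF PF])
    fix w :: "'a vec" assume w: "w \<in> carrier_vec (N*n)"
    show "poly_mat q (kron (1\<^sub>m N) A) *\<^sub>v w = 0\<^sub>v (N*n)"
    proof (rule vec_zero_by_blk)
      show "poly_mat q (kron (1\<^sub>m N) A) *\<^sub>v w \<in> carrier_vec (N*n)" using PF w by simp
      fix j assume j: "j < N"
      show "blk n j (poly_mat q (kron (1\<^sub>m N) A) *\<^sub>v w) = 0\<^sub>v n"
        using poly_blk[OF A j w] z by simp
    qed
  qed
qed

lemma min_poly_kron: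
  assumes A: "A \<in> carrier_mat n n" and N: "0 < N"
  shows "min_poly (kron (1\<^sub>m N) A) = min_poly A"
proof -
  have r: "dim_row (kron (1\<^sub>m N) A) = N*n" "dim_row A = n" using kron_dims_one[OF A] A by auto
  show ?thesis unfolding min_poly_def r poly_zero_iff[OF A N] ..
qed

lemma map_kron_one:
  assumes A: "A \<in> carrier_mat n n"
  shows "map_mat complex_of_real (kron (1\<^sub>m N) A) = kron (1\<^sub>m N) (map_mat complex_of_real A)"
proof (rule eq_matI)
  fix r c assume r: "r < dim_row (kron (1\<^sub>m N) (map_mat complex_of_real A))"
    and c: "c < dim_col (kron (1\<^sub>m N) (map_mat complex_of_real A))"
  have r': "r < N*n" and c': "c < N*n" using r c A by auto
  note dr = blk_decomp[OF r'] and dc = blk_decomp[OF c']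
  show "map_mat complex_of_real (kron (1\<^sub>m N) A) $$ (r, c) = kron (1\<^sub>m N) (map_mat complex_of_real A) $$ (r, c)"
    using r' c' dr(1,2) dc(1,2) A by (simp add: kron_def)
qed (use A in auto)

lemma alpha_plus_kron:
  assumes A: "A \<in> carrier_mat n n" and N: "0 < N"
  shows "alpha_plus (kron (1\<^sub>m N) A) = alpha_plus A"
  unfolding alpha_plus_def min_poly_kron[OF A N] ..

lemma vstack_dims[simp]: "dim_row (vstack P Q) = dim_row P + dim_row Q" "dim_col (vstack P Q) = dim_col P"
  by (auto simp: vstack_def)

lemma vstack_zero:
  assumes P: "P \<in> carrier_mat a b" and Q: "Q \<in> carrier_mat c b" and z: "z \<in> carrier_vec b"
    and h: "vstack P Q *\<^sub>v z = 0\<^sub>v (a+c)"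
  shows "P *\<^sub>v z = 0\<^sub>v a" "Q *\<^sub>v z = 0\<^sub>v c"
proof -
  show "P *\<^sub>v z = 0\<^sub>v a"
  proof (rule eq_vecI)
    fix r assume "r < dim_vec (0\<^sub>v a :: 'a vec)" hence r: "r < a" by simp
    have "row (vstack P Q) r = row P r" by (rule eq_vecI) (use P Q r in \<open>auto simp: vstack_def\<close>)
    hence "(P *\<^sub>v z) $ r = (vstack P Q *\<^sub>v z) $ r" using P Q r by simp
    also have "\<dots> = 0" using h r by simp
    finally show "(P *\<^sub>v z) $ r = 0\<^sub>v a $ r" using r by simp
  qed (use P in simp)
  show "Q *\<^sub>v z = 0\<^sub>v c"
  proof (rule eq_vecI)
    fix r assume "r < dim_vec (0\<^sub>v c :: 'a vec)" hence r: "r < c" by simp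
    have "row (vstack P Q) (a+r) = row Q r" by (rule eq_vecI) (use P Q r in \<open>auto simp: vstack_def\<close>)
    hence "(Q *\<^sub>v z) $ r = (vstack P Q *\<^sub>v z) $ (a+r)" using P Q r by simp
    also have "\<dots> = 0" using h r by simp
    finally show "(Q *\<^sub>v z) $ r = 0\<^sub>v c $ r" using r by simp
  qed (use Q in simp)
qed

lemma append_zero:
  assumes X: "X \<in> carrier_vec r1" and Y: "Y \<in> carrier_vec r2" and h: "X @\<^sub>v Y = 0\<^sub>v (r1+r2)"
  shows "X = 0\<^sub>v r1 \<and> Y = 0\<^sub>v r2"
proof -
  have "0\<^sub>v (r1+r2) = (0\<^sub>v r1 :: 'a::zero vec) @\<^sub>v 0\<^sub>v r2" by (rule eq_vecI) auto
  with h have "X @\<^sub>v Y = 0\<^sub>v r1 @\<^sub>v 0\<^sub>v r2" by simp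
  thus ?thesis using append_vec_eq[OF X, of "0\<^sub>v r1" Y "0\<^sub>v r2"] by simp
qed

lemma sum_cols: "\<forall>C\<in>set Cs. dim_col C = n \<Longrightarrow> sum_list (map dim_col Cs) = length Cs * n"
  by (induction Cs) auto

lemma diag_zero:
  fixes Cs :: "'a::comm_ring_1 mat list"
  shows "\<forall>C\<in>set Cs. dim_col C = n \<Longrightarrow> z \<in> carrier_vec (length Cs * n) \<Longrightarrow>
    diag_block_mat Cs *\<^sub>v z = 0\<^sub>v (dim_row (diag_block_mat Cs)) \<Longrightarrow> j < length Cs \<Longrightarrow>
    Cs ! j *\<^sub>v blk n j z = 0\<^sub>v (dim_row (Cs ! j))"
proof (induction Cs arbitrary: z j)
  case Nil
  then show ?case by simp
next
  case (Cons C Cs)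
  define D where "D = diag_block_mat Cs"
  define L where "L = length Cs"
  have cD: "dim_col D = L*n" unfolding D_def L_def dim_diag_block_mat using sum_cols Cons.prems(1) by auto
  have Dc: "D \<in> carrier_mat (dim_row D) (L*n)" using cD by auto
  have dC: "dim_col C = n" using Cons.prems(1) by simp
  have Cc: "C \<in> carrier_mat (dim_row C) n" using dC by auto
  have z: "z \<in> carrier_vec (n + L*n)" using Cons.prems(2) unfolding L_def by simp
  define a where "a = vec_first z n"
  define d where "d = vec_last z (L*n)"
  have a: "a \<in> carrier_vec n" and d: "d \<in> carrier_vec (L*n)" unfolding a_def d_def by auto
  have zad: "z = a @\<^sub>v d" unfolding a_def d_def using z by simp
  have blkdiag: "diag_block_mat (C # Cs) = four_block_mat C (0\<^sub>m (dim_row C) (dim_col D)) (0\<^sub>m (dim_row D) (dim_col C)) D"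
    unfolding D_def by (simp add: Let_def)
  have rr: "dim_row (diag_block_mat (C#Cs)) = dim_row C + dim_row D"
    unfolding blkdiag by (rule index_mat_four_block(2))
  have "diag_block_mat (C # Cs) *\<^sub>v z = (C *\<^sub>v a + 0\<^sub>m (dim_row C) (L*n) *\<^sub>v d) @\<^sub>v (0\<^sub>m (dim_row D) n *\<^sub>v a + D *\<^sub>v d)"
    unfolding blkdiag zad cD dC
    by (rule four_block_mat_mult_vec[OF Cc _ _ Dc a d]) auto
  also have "\<dots> = (C *\<^sub>v a) @\<^sub>v (D *\<^sub>v d)"
    unfolding zero_mat_mult_vec[OF d] zero_mat_mult_vec[OF a] right_zero_vec[OF mult_mat_vec_carrier[OF Cc a]]
      left_zero_vec[OF mult_mat_vec_carrier[OF Dc d]] ..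
  finally have calc: "diag_block_mat (C # Cs) *\<^sub>v z = (C *\<^sub>v a) @\<^sub>v (D *\<^sub>v d)" .
  from Cons.prems(3) have e: "(C *\<^sub>v a) @\<^sub>v (D *\<^sub>v d) = 0\<^sub>v (dim_row C + dim_row D)"
    unfolding calc rr .
  note ZZ = append_zero[OF mult_mat_vec_carrier[OF Cc a] mult_mat_vec_carrier[OF Dc d] e]
  have Z1: "C *\<^sub>v a = 0\<^sub>v (dim_row C)" using ZZ by (rule conjunct1)
  have Z2: "D *\<^sub>v d = 0\<^sub>v (dim_row D)" using ZZ by (rule conjunct2)
  show ?case
  proof (cases j)
    case 0
    have "blk n 0 z = a"
    proof (rule eq_vecI)
      fix t assume "t < dim_vec a" hence t: "t < n" using a by simp
      show "blk n 0 z $ t = a $ t" unfolding a_def vec_first_def using t by simp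
    qed (use a in simp)
    hence "(C # Cs) ! j *\<^sub>v blk n j z = C *\<^sub>v a" using 0 by simp
    also have "\<dots> = 0\<^sub>v (dim_row ((C # Cs) ! j))" using Z1 0 by simp
    finally show ?thesis .
  next
    case (Suc j')
    have j': "j' < L" using Cons.prems(4) Suc unfolding L_def by simp
    have "blk n j z = blk n j' d"
    proof (rule eq_vecI)
      fix t assume "t < dim_vec (blk n j' d)" hence t: "t < n" by simp
      have lt: "j'*n+t < L*n" by (rule idx_lt[OF j' t])
      have e1: "blk n j' d $ t = z $ (dim_vec z - L*n + (j'*n+t))"
        using t lt unfolding d_def vec_last_def by simp
      have e2: "dim_vec z - L*n + (j'*n+t) = j*n+t" using z Suc by simp
      show "blk n j z $ t = blk n j' d $ t" unfolding e1 e2 using t by simp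
    qed simp
    moreover have "Cs ! j' *\<^sub>v blk n j' d = 0\<^sub>v (dim_row (Cs ! j'))"
      using Cons.IH[of d j'] Cons.prems(1) d Z2 j' unfolding D_def L_def by simp
    ultimately show ?thesis using Suc by simp
  qed
qed

lemma lap_sum:
  assumes k: "k < N"
  shows "(\<Sum>l<N. laplacian N E $$ (k,l) * w l) =
    real (in_degree N E k) * w k - (\<Sum>l\<in>{l\<in>{0..<N}. (l,k)\<in>E}. w l)"
proof -
  have Lkl: "laplacian N E $$ (k,l) = (if k = l then real (in_degree N E k) else 0) - (if (l,k)\<in>E then 1 else 0)"
    if l: "l < N" for l
    using k l by (simp add: laplacian_def adjacency_def)
  have "(\<Sum>l<N. laplacian N E $$ (k,l) * w l) =
     (\<Sum>l<N. (if k = l then real (in_degree N E k) * w l else 0) - (if (l,k)\<in>E then w l else 0))"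
  proof (rule sum.cong[OF refl])
    fix l assume "l \<in> {..<N}" hence l: "l < N" by simp
    show "laplacian N E $$ (k,l) * w l = (if k = l then real (in_degree N E k) * w l else 0) - (if (l,k)\<in>E then w l else 0)"
      unfolding Lkl[OF l] by (cases "k = l"; cases "(l,k) \<in> E") (simp_all add: left_diff_distrib)
  qed
  also have "\<dots> = (\<Sum>l<N. (if k = l then real (in_degree N E k) * w l else 0)) - (\<Sum>l<N. if (l,k)\<in>E then w l else 0)"
    by (rule sum_subtractf)
  also have "(\<Sum>l<N. (if k = l then real (in_degree N E k) * w l else 0)) = real (in_degree N E k) * w k"
    using k by (simp add: sum.delta)
  also have "(\<Sum>l<N. if (l,k)\<in>E then w l else 0) = (\<Sum>l\<in>{l\<in>{0..<N}. (l,k)\<in>E}. w l)"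
    unfolding lessThan_atLeast0 by (rule sum.inter_filter[symmetric]) simp
  finally show ?thesis .
qed

lemma maxp:
  fixes w :: "nat \<Rightarrow> real"
  assumes E: "E \<subseteq> {0..<N} \<times> {0..<N}" and st: "has_spanning_tree N E i"
    and h: "\<And>k. k < N \<Longrightarrow> real (in_degree N E k) * w k = (\<Sum>l\<in>{l\<in>{0..<N}. (l,k)\<in>E}. w l)"
    and wi: "w i = 0"
  shows "\<forall>k<N. w k \<le> 0"
proof -
  have st': "i < N \<and> (\<exists>T \<subseteq> E.
     (\<forall>l. (l, i) \<notin> T) \<and>
     (\<forall>k < N. k \<noteq> i \<longrightarrow> (\<exists>!l. (l, k) \<in> T)) \<and>
     (\<forall>k < N. (i, k) \<in> T\<^sup>*))" using st unfolding has_spanning_tree_def .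
  have iN: "i < N" using st' by (rule conjunct1)
  obtain T where TT: "T \<subseteq> E \<and> (\<forall>l. (l, i) \<notin> T) \<and>
     (\<forall>k < N. k \<noteq> i \<longrightarrow> (\<exists>!l. (l, k) \<in> T)) \<and>
     (\<forall>k < N. (i, k) \<in> T\<^sup>*)" using conjunct2[OF st'] by (rule exE)
  have TE: "T \<subseteq> E" using TT by (rule conjunct1)
  have reach: "\<forall>k<N. (i,k) \<in> T\<^sup>*" using TT by (elim conjE)
  define M where "M = Max (w ` {0..<N})"
  have fin: "finite (w ` {0..<N})" and ne: "w ` {0..<N} \<noteq> {}" using iN by auto
  have Mge: "\<And>k. k < N \<Longrightarrow> w k \<le> M" unfolding M_def using fin by (intro Max_ge) auto
  have "M \<in> w ` {0..<N}" unfolding M_def using fin ne by (rule Max_in)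
  then obtain k0 where k0: "k0 < N" "w k0 = M" by auto
  have pred: "w l = M" if z: "z < N" "w z = M" and lz: "(l,z) \<in> E" for z l
  proof -
    define P where "P = {l\<in>{0..<N}. (l,z)\<in>E}"
    have finP: "finite P" unfolding P_def by simp
    have "(\<Sum>l\<in>P. M - w l) = real (card P) * M - (\<Sum>l\<in>P. w l)"
      by (simp add: sum_subtractf)
    also have "\<dots> = 0"
    proof -
      have "real (card P) * w z = (\<Sum>l\<in>P. w l)" using h[OF z(1)] unfolding in_degree_def P_def .
      thus ?thesis using z(2) by simp
    qed
    finally have s0: "(\<Sum>l\<in>P. M - w l) = 0" .
    have nn: "\<forall>l\<in>P. 0 \<le> M - w l" using Mge unfolding P_def by auto
    have lP: "l \<in> P" using lz E unfolding P_def by auto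
    have "\<forall>x\<in>P. M - w x = 0" using sum_nonneg_eq_0_iff[OF finP, of "\<lambda>l. M - w l"] nn s0 by auto
    hence "M - w l = 0" using lP by (rule bspec)
    thus ?thesis by simp
  qed
  have claim: "(i,k) \<in> T\<^sup>* \<Longrightarrow> k < N \<Longrightarrow> w k = M \<Longrightarrow> w i = M" for k
  proof (induction rule: rtrancl_induct)
    case base
    then show ?case by simp
  next
    case (step y z)
    have yzE: "(y,z) \<in> E" using step.hyps(2) TE by auto
    hence yN: "y < N" using E by auto
    have "w y = M" by (rule pred[OF step.prems yzE])
    thus ?case using step.IH yN by simp
  qed
  have "w i = M" using claim[OF _ k0(1) k0(2)] reach k0(1) by simp
  thus ?thesis using Mge wi by auto
qed

lemma lap_kernel:
  fixes w :: "nat \<Rightarrow> real"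
  assumes E: "E \<subseteq> {0..<N} \<times> {0..<N}" and st: "has_spanning_tree N E i"
    and h: "\<And>k. k < N \<Longrightarrow> (\<Sum>l<N. laplacian N E $$ (k,l) * w l) = 0"
    and wi: "w i = 0"
  shows "\<And>k. k < N \<Longrightarrow> w k = 0"
proof -
  fix k assume k: "k < N"
  have h1: "real (in_degree N E k) * w k = (\<Sum>l\<in>{l\<in>{0..<N}. (l,k)\<in>E}. w l)" if k: "k < N" for k
  proof -
    have "real (in_degree N E k) * w k - (\<Sum>l\<in>{l\<in>{0..<N}. (l,k)\<in>E}. w l) = 0"
      using h[OF k] unfolding lap_sum[OF k] .
    thus ?thesis by simp
  qed
  have h2: "real (in_degree N E k) * (- w k) = (\<Sum>l\<in>{l\<in>{0..<N}. (l,k)\<in>E}. - w l)" if k: "k < N" for k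
    using h1[OF k] by (simp add: sum_negf)
  have a: "w k \<le> 0" using maxp[OF E st h1 wi] k by blast
  have b: "- w k \<le> 0" using maxp[OF E st h2] wi k by simp
  show "w k = 0" using a b by simp
qed

lemma mult_zero_vec: "M \<in> carrier_mat a b \<Longrightarrow> (M :: 'a::semiring_0 mat) *\<^sub>v 0\<^sub>v b = 0\<^sub>v a"
  by (intro eq_vecI) (auto simp: scalar_prod_def)

lemma lap_carrier: "laplacian N E \<in> carrier_mat N N"
  unfolding laplacian_def adjacency_def by (intro carrier_matI) auto

theorem corollary2:
  fixes N n p :: nat and A H :: "real mat" and Cs :: "real mat list"
    and E :: "(nat \<times> nat) set" and i :: nat
  assumes "A \<in> carrier_mat n n"
    and "length Cs = N"
    and "\<forall>j < N. dim_col (Cs ! j) = n"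
    and "H \<in> carrier_mat p n"
    and "E \<subseteq> {0..<N} \<times> {0..<N}"
    and "\<forall>k. (k, k) \<notin> E"
    and "has_spanning_tree N E i"
    and "detectable (Cs ! i) A"
    and "\<forall>j < N. unobservable_subspace H A \<inter> undetectable_subspace (Cs ! j) A = {0\<^sub>v n}"
  shows "detectable (vstack (diag_block_mat Cs) (kron (laplacian N E) H)) (kron (1\<^sub>m N) A)"
proof -
  note A = assms(1) and H = assms(4) and E = assms(5) and st = assms(7)
  have iN: "i < N" using st unfolding has_spanning_tree_def by (rule conjunct1)
  hence N: "0 < N" by simp
  define F where "F = kron (1\<^sub>m N) A"
  define D where "D = diag_block_mat Cs"
  define L where "L = laplacian N E"
  define K where "K = kron L H"
  define G where "G = vstack D K"
  have Fc: "F \<in> carrier_mat (N*n) (N*n)" unfolding F_def by (rule kron_one_carrier[OF A])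
  have dF: "dim_row F = N*n" using Fc by auto
  have setC: "\<forall>C\<in>set Cs. dim_col C = n" using assms(2,3) by (auto simp: in_set_conv_nth)
  have cD: "dim_col D = N*n" unfolding D_def dim_diag_block_mat(2) sum_cols[OF setC] assms(2) ..
  have Dc: "D \<in> carrier_mat (dim_row D) (N*n)" using cD by (intro carrier_matI) auto
  have Lc: "L \<in> carrier_mat N N" unfolding L_def by (rule lap_carrier)
  have Kc: "K \<in> carrier_mat (N*p) (N*n)"
  proof -
    have "dim_row L = N" "dim_col L = N" "dim_row H = p" "dim_col H = n" using Lc H by auto
    thus ?thesis unfolding K_def carrier_mat_def kron_dims by simp
  qed
  have Gc: "G \<in> carrier_mat (dim_row D + N*p) (N*n)"
  proof -
    have "dim_row K = N*p" "dim_col D = N*n" using Kc Dc by auto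
    thus ?thesis unfolding G_def carrier_mat_def vstack_dims by simp
  qed
  have dG: "dim_row G = dim_row D + N*p" using Gc by auto
  define AC where "AC = map_mat complex_of_real A"
  have ACc: "AC \<in> carrier_mat n n" unfolding AC_def using A by simp
  define PA where "PA = poly_mat (alpha_plus A) AC"
  have PAc: "PA \<in> carrier_mat n n" unfolding PA_def by (rule poly_carrier[OF ACc])
  have PF: "poly_mat (alpha_plus F) (map_mat complex_of_real F) = poly_mat (alpha_plus A) (kron (1\<^sub>m N) AC)"
    unfolding F_def alpha_plus_kron[OF A N] map_kron_one[OF A] AC_def ..
  have PFc: "poly_mat (alpha_plus F) (map_mat complex_of_real F) \<in> carrier_mat (N*n) (N*n)"
    unfolding PF by (rule poly_carrier[OF kron_one_carrier[OF ACc]])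
  have "undetectable_subspace G F = {0\<^sub>v (N*n)}"
  proof
    show "{0\<^sub>v (N*n)} \<subseteq> undetectable_subspace G F"
    proof -
      have "(G * F ^\<^sub>m (l - 1)) *\<^sub>v 0\<^sub>v (N*n) = 0\<^sub>v (dim_row G)" for l
        using mult_zero_vec[OF mult_carrier_mat[OF Gc pow_carrier_mat[OF Fc]]] dG by simp
      moreover have "poly_mat (alpha_plus F) (map_mat complex_of_real F) *\<^sub>v map_vec complex_of_real (0\<^sub>v (N*n))
          = 0\<^sub>v (N*n)"
      proof -
        have mz: "map_vec complex_of_real (0\<^sub>v (N*n)) = 0\<^sub>v (N*n)" by (rule eq_vecI) auto
        show ?thesis unfolding mz by (rule mult_zero_vec[OF PFc])
      qed
      ultimately show ?thesis unfolding undetectable_subspace_def dF by auto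
    qed
  next
    show "undetectable_subspace G F \<subseteq> {0\<^sub>v (N*n)}"
    proof
      fix x assume xU: "x \<in> undetectable_subspace G F"
      have x: "x \<in> carrier_vec (N*n)" using xU unfolding undetectable_subspace_def dF by simp
      have xo: "\<And>l. l \<in> {1..N*n} \<Longrightarrow> (G * F ^\<^sub>m (l - 1)) *\<^sub>v x = 0\<^sub>v (dim_row G)"
        using xU unfolding undetectable_subspace_def dF by blast
      have xa: "poly_mat (alpha_plus F) (map_mat complex_of_real F) *\<^sub>v map_vec complex_of_real x = 0\<^sub>v (N*n)"
        using xU unfolding undetectable_subspace_def dF by blast
      define xs where "xs = (\<lambda>j. blk n j x)"
      have xsc: "xs j \<in> carrier_vec n" for j unfolding xs_def by simp
      have obs: "(Cs ! j * A ^\<^sub>m m) *\<^sub>v xs j = 0\<^sub>v (dim_row (Cs ! j)) \<and>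
          (\<forall>k<N. \<forall>r<p. (\<Sum>l<N. L $$ (k,l) * ((H * A ^\<^sub>m m) *\<^sub>v xs l) $ r) = 0)"
        if m: "m < n" and j: "j < N" for m j
      proof -
        have "Suc m \<in> {1..N*n}"
        proof -
          have "n \<le> N*n" using N by simp
          hence "Suc m \<le> N*n" using m by linarith
          thus ?thesis by simp
        qed
        hence "(G * F ^\<^sub>m m) *\<^sub>v x = 0\<^sub>v (dim_row G)" using xo[of "Suc m"] by simp
        moreover have "(G * F ^\<^sub>m m) *\<^sub>v x = G *\<^sub>v (F ^\<^sub>m m *\<^sub>v x)"
          by (rule assoc_mult_mat_vec[OF Gc pow_carrier_mat[OF Fc] x])
        ultimately have Gz: "vstack D K *\<^sub>v (F ^\<^sub>m m *\<^sub>v x) = 0\<^sub>v (dim_row D + N*p)"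
          unfolding dG G_def using Kc by simp
        define z where "z = F ^\<^sub>m m *\<^sub>v x"
        have zc: "z \<in> carrier_vec (N*n)" unfolding z_def using mult_mat_vec_carrier[OF pow_carrier_mat[OF Fc] x] .
        have bz: "blk n l z = A ^\<^sub>m m *\<^sub>v xs l" if l: "l < N" for l
          unfolding z_def F_def xs_def by (rule kron_one_pow_blk[OF A l x])
        have Dz: "D *\<^sub>v z = 0\<^sub>v (dim_row D)" and Kz: "K *\<^sub>v z = 0\<^sub>v (N*p)"
          using vstack_zero[OF Dc Kc zc] Gz unfolding z_def by auto
        have "Cs ! j *\<^sub>v blk n j z = 0\<^sub>v (dim_row (Cs ! j))"
          by (rule diag_zero[OF setC]) (use zc Dz j assms(2) in \<open>simp_all add: D_def\<close>)
        moreover have "(Cs ! j * A ^\<^sub>m m) *\<^sub>v xs j = Cs ! j *\<^sub>v blk n j z"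
        proof -
          have "Cs ! j \<in> carrier_mat (dim_row (Cs ! j)) n" using assms(3) j by auto
          thus ?thesis unfolding bz[OF j] using assoc_mult_mat_vec[OF _ pow_carrier_mat[OF A] xsc] by blast
        qed
        moreover have "\<forall>k<N. \<forall>r<p. (\<Sum>l<N. L $$ (k,l) * ((H * A ^\<^sub>m m) *\<^sub>v xs l) $ r) = 0"
        proof (intro allI impI)
          fix k r assume k: "k < N" and r: "r < p"
          have "(K *\<^sub>v z) $ (k*p+r) = (\<Sum>l<N. L $$ (k,l) * (H *\<^sub>v blk n l z) $ r)"
            unfolding K_def by (rule kron_mult_vec[OF Lc H zc k r])
          also have "\<dots> = (\<Sum>l<N. L $$ (k,l) * ((H * A ^\<^sub>m m) *\<^sub>v xs l) $ r)"
          proof (rule sum.cong[OF refl])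
            fix l assume "l \<in> {..<N}" hence l: "l < N" by simp
            have "(H * A ^\<^sub>m m) *\<^sub>v xs l = H *\<^sub>v (A ^\<^sub>m m *\<^sub>v xs l)"
              by (rule assoc_mult_mat_vec[OF H pow_carrier_mat[OF A] xsc])
            thus "L $$ (k,l) * (H *\<^sub>v blk n l z) $ r = L $$ (k,l) * ((H * A ^\<^sub>m m) *\<^sub>v xs l) $ r"
              unfolding bz[OF l] by simp
          qed
          finally have "(\<Sum>l<N. L $$ (k,l) * ((H * A ^\<^sub>m m) *\<^sub>v xs l) $ r) = (K *\<^sub>v z) $ (k*p+r)" by simp
          also have "\<dots> = 0" unfolding Kz using idx_lt[OF k r] by simp
          finally show "(\<Sum>l<N. L $$ (k,l) * ((H * A ^\<^sub>m m) *\<^sub>v xs l) $ r) = 0" .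
        qed
        ultimately show ?thesis by simp
      qed
      have alp: "PA *\<^sub>v map_vec complex_of_real (xs j) = 0\<^sub>v n" if j: "j < N" for j
      proof -
        have mx: "map_vec complex_of_real x \<in> carrier_vec (N*n)" using x by simp
        have "PA *\<^sub>v map_vec complex_of_real (xs j) = PA *\<^sub>v blk n j (map_vec complex_of_real x)"
          unfolding xs_def blk_map[OF x j] ..
        also have "\<dots> = blk n j (poly_mat (alpha_plus A) (kron (1\<^sub>m N) AC) *\<^sub>v map_vec complex_of_real x)"
          unfolding PA_def by (rule poly_blk[OF ACc j mx, symmetric])
        also have "\<dots> = 0\<^sub>v n" using xa unfolding PF using blk_zero[OF j] by simp
        finally show ?thesis .
      qed
      have undet: "xs j \<in> undetectable_subspace (Cs ! j) A" if j: "j < N" for j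
      proof -
        have dA: "dim_row A = n" using A by auto
        have "\<forall>l\<in>{1..n}. (Cs ! j * A ^\<^sub>m (l - 1)) *\<^sub>v xs j = 0\<^sub>v (dim_row (Cs ! j))"
        proof
          fix l assume "l \<in> {1..n}" hence "l - 1 < n" by auto
          thus "(Cs ! j * A ^\<^sub>m (l - 1)) *\<^sub>v xs j = 0\<^sub>v (dim_row (Cs ! j))" using obs j by blast
        qed
        moreover have "poly_mat (alpha_plus A) (map_mat complex_of_real A) *\<^sub>v map_vec complex_of_real (xs j) = 0\<^sub>v n"
          using alp[OF j] unfolding PA_def AC_def .
        ultimately show ?thesis unfolding undetectable_subspace_def dA using xsc by blast
      qed
      have xi: "xs i = 0\<^sub>v n"
      proof -
        have "undetectable_subspace (Cs ! i) A = {0\<^sub>v n}" using assms(8) A unfolding detectable_def by auto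
        thus ?thesis using undet[OF iN] by blast
      qed
      have unobs: "xs l \<in> unobservable_subspace H A" if l: "l < N" for l
      proof -
        have dA: "dim_row A = n" and dH: "dim_row H = p" using A H by auto
        have "(H * A ^\<^sub>m m) *\<^sub>v xs l = 0\<^sub>v p" if m: "m < n" for m
        proof (rule eq_vecI)
          fix r assume "r < dim_vec (0\<^sub>v p :: real vec)" hence r: "r < p" by simp
          define w where "w = (\<lambda>l. ((H * A ^\<^sub>m m) *\<^sub>v xs l) $ r)"
          have hw: "\<And>k. k < N \<Longrightarrow> (\<Sum>l<N. laplacian N E $$ (k,l) * w l) = 0"
            using obs[OF m iN] r unfolding w_def L_def by blast
          have wi: "w i = 0"
          proof -
            have "(H * A ^\<^sub>m m) *\<^sub>v xs i = 0\<^sub>v p"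
              unfolding xi by (rule mult_zero_vec[OF mult_carrier_mat[OF H pow_carrier_mat[OF A]]])
            thus ?thesis unfolding w_def using r by simp
          qed
          have "w l = 0" by (rule lap_kernel[OF E st hw wi l])
          thus "((H * A ^\<^sub>m m) *\<^sub>v xs l) $ r = 0\<^sub>v p $ r" unfolding w_def using r by simp
        qed (use H in simp)
        hence "\<forall>l'\<in>{1..n}. (H * A ^\<^sub>m (l' - 1)) *\<^sub>v xs l = 0\<^sub>v (dim_row H)" unfolding dH by auto
        thus ?thesis unfolding unobservable_subspace_def dA using xsc by blast
      qed
      have xs0: "xs l = 0\<^sub>v n" if l: "l < N" for l
        using assms(9) l unobs[OF l] undet[OF l] by blast
      have "x = 0\<^sub>v (N*n)"
        by (rule vec_zero_by_blk[OF x]) (use xs0 in \<open>simp add: xs_def\<close>)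
      thus "x \<in> {0\<^sub>v (N*n)}" by simp
    qed
  qed
  thus ?thesis unfolding detectable_def dF G_def[symmetric] D_def[symmetric] K_def[symmetric] L_def[symmetric] F_def[symmetric] .
qed

end
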